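(* Let $P$ be a $d$-polytope. If its slack ideal $I_P$ is a pure difference binomial ideal, then $I_P\subseteq T_P$.
   Context: Let $P\subset\mathbb{R}^d$ be a $d$-dimensional polytope with labelled vertices $\mathbf p_1,\dots,\mathbf p_v$ and labelled facets $F_1,\dots,F_f$. The symbolic slack matrix $S_P(\mathbf x)$ is the $v\times f$ matrix with a $0$ in entry $(i,j)$ if $\mathbf p_i\in F_j$ and a distinct variable $x_{ij}$ otherwise; let $x_1,\dots,x_t$ denote all these variables. The slack ideal is $I_P=\langle (d+2)\text{-minors of } S_P(\mathbf x)\rangle : (x_1\cdots x_t)^\infty\subseteq\mathbb{C}[x_1,\dots,x_t]$. An ideal is a pure difference binomial ideal if it is generated by binomials $\mathbf x^{\mathbf a}-\mathbf x^{\mathbf b}$ with $\mathbf a,\mathbf b\in\mathbb{Z}^t_{\ge0}$. The non-incidence graph $G_P$ is the bipartite graph on the vertices and facets of $P$ with an edge $\{\mathbf p_i,F_j\}$ iff $\mathbf p_i\notin F_j$ (labelled by $x_{ij}$). $T_P$ is the toric ideal of the vertex-edge incidence matrix of $G_P$, i.e. the kernel of the map $x_{ij}\mapsto s_iu_j$ into $\mathbb{C}[s_1^{\pm1},\dots,s_v^{\pm1},u_1^{\pm1},\dots,u_f^{\pm1}]$. *)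

theory Defs
  imports "HOL-Analysis.Analysis" "HOL-Library.Poly_Mapping"
begin

text \<open>Multivariate polynomials over the complex numbers in variables of type 'v:
  finitely supported maps from monomials (finitely supported exponent vectors) to coefficients.\<close>
type_synonym 'v cpoly = "('v \<Rightarrow>\<^sub>0 nat) \<Rightarrow>\<^sub>0 complex"

definition pvar :: "'v \<Rightarrow> 'v cpoly" where
  "pvar v = Poly_Mapping.single (Poly_Mapping.single v 1) 1"

definition pmonom :: "('v \<Rightarrow>\<^sub>0 nat) \<Rightarrow> 'v cpoly" where
  "pmonom a = Poly_Mapping.single a 1"

definition poly_ring :: "'v set \<Rightarrow> 'v cpoly set" where
  "poly_ring V = {f. \<forall>m \<in> Poly_Mapping.keys f. Poly_Mapping.keys m \<subseteq> V}"

definition ideal_gen :: "'v set \<Rightarrow> 'v cpoly set \<Rightarrow> 'v cpoly set" where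
  "ideal_gen V G = {f. \<exists>A c. finite A \<and> A \<subseteq> G \<and> (\<forall>g\<in>A. c g \<in> poly_ring V)
                           \<and> f = (\<Sum>g\<in>A. c g * g)}"

definition saturation :: "'v set \<Rightarrow> 'v cpoly set \<Rightarrow> 'v cpoly set" where
  "saturation V I = {f \<in> poly_ring V. \<exists>k::nat. (\<Prod>v\<in>V. pvar v) ^ k * f \<in> I}"

definition pure_difference_binomial_ideal :: "'v set \<Rightarrow> 'v cpoly set \<Rightarrow> bool" where
  "pure_difference_binomial_ideal V I \<longleftrightarrow>
     (\<exists>G. G \<subseteq> {pmonom a - pmonom b | a b. Poly_Mapping.keys a \<subseteq> V \<and> Poly_Mapping.keys b \<subseteq> V}
          \<and> I = ideal_gen V G)"

definition poly_vertices :: "'a::euclidean_space set \<Rightarrow> 'a set" where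
  "poly_vertices P = {p. p extreme_point_of P}"

definition poly_facets :: "'a::euclidean_space set \<Rightarrow> 'a set set" where
  "poly_facets P = {F. F facet_of P}"

text \<open>Variables of the symbolic slack matrix: non-incident vertex/facet pairs
  (equivalently, the edges of the non-incidence graph G_P).\<close>
definition slack_vars :: "'a::euclidean_space set \<Rightarrow> ('a \<times> 'a set) set" where
  "slack_vars P = {(p, F). p \<in> poly_vertices P \<and> F \<in> poly_facets P \<and> p \<notin> F}"

definition symbolic_slack :: "'a::euclidean_space set \<Rightarrow> 'a \<Rightarrow> 'a set \<Rightarrow> ('a \<times> 'a set) cpoly" where
  "symbolic_slack P p F = (if p \<in> F then 0 else pvar (p, F))"

definition minor_det :: "('r \<Rightarrow> 'c \<Rightarrow> 'b::comm_ring_1) \<Rightarrow> 'r list \<Rightarrow> 'c list \<Rightarrow> 'b" where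
  "minor_det M rs cs =
     (\<Sum>\<sigma> \<in> {\<sigma>. \<sigma> permutes {..<length rs}}.
        of_int (sign \<sigma>) * (\<Prod>i<length rs. M (rs ! i) (cs ! (\<sigma> i))))"

definition slack_minors :: "nat \<Rightarrow> 'a::euclidean_space set \<Rightarrow> ('a \<times> 'a set) cpoly set" where
  "slack_minors k P = {minor_det (symbolic_slack P) rs cs | rs cs.
      distinct rs \<and> distinct cs \<and> length rs = k \<and> length cs = k \<and>
      set rs \<subseteq> poly_vertices P \<and> set cs \<subseteq> poly_facets P}"

definition slack_ideal :: "'a::euclidean_space set \<Rightarrow> ('a \<times> 'a set) cpoly set" where
  "slack_ideal P = saturation (slack_vars P)
      (ideal_gen (slack_vars P) (slack_minors (DIM('a) + 2) P))"

text \<open>The monomial map x_{pF} -> s_p u_F, with s_p = Inl p and u_F = Inr F.\<close>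
definition edge_monomial_map :: "('a \<times> 'a set \<Rightarrow>\<^sub>0 nat) \<Rightarrow> ('a + 'a set \<Rightarrow>\<^sub>0 nat)" where
  "edge_monomial_map m = (\<Sum>(p, F) \<in> Poly_Mapping.keys m.
      Poly_Mapping.single (Inl p) (Poly_Mapping.lookup m (p, F)) + Poly_Mapping.single (Inr F) (Poly_Mapping.lookup m (p, F)))"

definition toric_hom :: "('a \<times> 'a set) cpoly \<Rightarrow> ('a + 'a set) cpoly" where
  "toric_hom f = (\<Sum>m \<in> Poly_Mapping.keys f. Poly_Mapping.single (edge_monomial_map m) (Poly_Mapping.lookup f m))"

definition toric_ideal :: "'a::euclidean_space set \<Rightarrow> ('a \<times> 'a set) cpoly set" where
  "toric_ideal P = {f \<in> poly_ring (slack_vars P). toric_hom f = 0}"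

end

theory Submission
  imports Defs Jordan_Normal_Form.Determinant
begin

definition lext :: "(complex \<Rightarrow> 'b::comm_ring_1) \<Rightarrow> (('v \<Rightarrow>\<^sub>0 nat) \<Rightarrow> 'b) \<Rightarrow> 'v cpoly \<Rightarrow> 'b" where
  "lext c \<psi> f = (\<Sum>m\<in>Poly_Mapping.keys f. c (Poly_Mapping.lookup f m) * \<psi> m)"

lemma poly_mapping_expand:
  "f = (\<Sum>m\<in>Poly_Mapping.keys f. Poly_Mapping.single m (Poly_Mapping.lookup f m))"
  by (rule poly_mapping_eqI)
     (auto simp: lookup_sum lookup_single when_def in_keys_iff sum.delta)

locale lext_hom =
  fixes c :: "complex \<Rightarrow> 'b::comm_ring_1" and \<psi> :: "('v \<Rightarrow>\<^sub>0 nat) \<Rightarrow> 'b"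
  assumes c_hom: "comm_ring_hom c"
    and psi0: "\<psi> 0 = 1"
    and psi_add: "\<And>a b. \<psi> (a + b) = \<psi> a * \<psi> b"
begin

interpretation c: comm_ring_hom c by (rule c_hom)

lemma lext_superset:
  assumes "finite A" "Poly_Mapping.keys f \<subseteq> A"
  shows "lext c \<psi> f = (\<Sum>m\<in>A. c (Poly_Mapping.lookup f m) * \<psi> m)"
  unfolding lext_def
  by (rule sum.mono_neutral_left) (use assms in \<open>auto simp: in_keys_iff\<close>)

lemma lext_add: "lext c \<psi> (f + g) = lext c \<psi> f + lext c \<psi> g"
proof -
  let ?A = "Poly_Mapping.keys f \<union> Poly_Mapping.keys g"
  have "lext c \<psi> (f + g) = (\<Sum>m\<in>?A. c (Poly_Mapping.lookup (f+g) m) * \<psi> m)"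
    by (rule lext_superset) (use keys_add[of f g] in auto)
  also have "\<dots> = (\<Sum>m\<in>?A. c (Poly_Mapping.lookup f m) * \<psi> m) + (\<Sum>m\<in>?A. c (Poly_Mapping.lookup g m) * \<psi> m)"
    by (simp add: lookup_add c.hom_add distrib_right sum.distrib)
  also have "\<dots> = lext c \<psi> f + lext c \<psi> g"
    by (simp add: lext_superset[of ?A f] lext_superset[of ?A g])
  finally show ?thesis .
qed

lemma lext_zero: "lext c \<psi> 0 = 0" by (simp add: lext_def)

lemma lext_single: "lext c \<psi> (Poly_Mapping.single m z) = c z * \<psi> m"
  by (cases "z = 0") (auto simp: lext_def)

lemma lext_sum: "lext c \<psi> (sum F A) = (\<Sum>x\<in>A. lext c \<psi> (F x))"
  by (induction A rule: infinite_finite_induct) (auto simp: lext_zero lext_add)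

lemma lext_mult: "lext c \<psi> (f * g) = lext c \<psi> f * lext c \<psi> g"
proof -
  have "f * g = (\<Sum>m\<in>Poly_Mapping.keys f. Poly_Mapping.single m (Poly_Mapping.lookup f m))
     * (\<Sum>n\<in>Poly_Mapping.keys g. Poly_Mapping.single n (Poly_Mapping.lookup g n))"
    using poly_mapping_expand[of f] poly_mapping_expand[of g] by simp
  also have "\<dots> = (\<Sum>m\<in>Poly_Mapping.keys f. \<Sum>n\<in>Poly_Mapping.keys g.
      Poly_Mapping.single (m + n) (Poly_Mapping.lookup f m * Poly_Mapping.lookup g n))"
    apply (simp add: sum_distrib_left sum_distrib_right mult_single)
    by (rule sum.swap)
  finally have "lext c \<psi> (f * g) = (\<Sum>m\<in>Poly_Mapping.keys f. \<Sum>n\<in>Poly_Mapping.keys g.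
      c (Poly_Mapping.lookup f m) * \<psi> m * (c (Poly_Mapping.lookup g n) * \<psi> n))"
    by (simp add: lext_sum lext_single c.hom_mult psi_add mult_ac)
  also have "\<dots> = lext c \<psi> f * lext c \<psi> g"
    apply (simp add: lext_def sum_distrib_left sum_distrib_right)
    by (rule sum.swap)
  finally show ?thesis .
qed

lemma lext_one: "lext c \<psi> 1 = 1"
  using lext_single[of 0 1] by (simp add: psi0)

lemma is_hom: "comm_ring_hom (lext c \<psi>)"
  by unfold_locales (auto simp: lext_one lext_mult lext_add lext_zero)

end

definition mmon :: "('v \<Rightarrow> complex) \<Rightarrow> ('v \<Rightarrow>\<^sub>0 nat) \<Rightarrow> complex" where
  "mmon X m = (\<Prod>v\<in>Poly_Mapping.keys m. X v ^ Poly_Mapping.lookup m v)"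

lemma mmon_superset:
  assumes "finite A" "Poly_Mapping.keys m \<subseteq> A"
  shows "mmon X m = (\<Prod>v\<in>A. X v ^ Poly_Mapping.lookup m v)"
  unfolding mmon_def
  by (rule prod.mono_neutral_left) (use assms in \<open>auto simp: in_keys_iff\<close>)

lemma mmon_add: "mmon X (a + b) = mmon X a * mmon X b"
proof -
  let ?A = "Poly_Mapping.keys a \<union> Poly_Mapping.keys b"
  have "mmon X (a + b) = (\<Prod>v\<in>?A. X v ^ Poly_Mapping.lookup (a+b) v)"
    by (rule mmon_superset) (use keys_add[of a b] in auto)
  also have "\<dots> = mmon X a * mmon X b"
    by (simp add: lookup_add power_add prod.distrib mmon_superset[of ?A a] mmon_superset[of ?A b])
  finally show ?thesis .
qed

lemma mmon_zero: "mmon X 0 = 1" by (simp add: mmon_def)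

lemma mmon_mult_fun: "mmon (\<lambda>v. Y v * Z v) a = mmon Y a * mmon Z a"
  by (simp add: mmon_def power_mult_distrib prod.distrib)

definition peval :: "('v \<Rightarrow> complex) \<Rightarrow> 'v cpoly \<Rightarrow> complex" where
  "peval X = lext (\<lambda>z. z) (mmon X)"

lemma peval_lext: "lext_hom (\<lambda>z. z) (mmon X)"
  by unfold_locales (auto simp: mmon_zero mmon_add intro: comm_ring_hom.intro ring_hom.intro semiring_hom.intro
    comm_monoid_add_hom.intro monoid_mult_hom.intro)

lemma peval_hom: "comm_ring_hom (peval X)"
  unfolding peval_def by (rule lext_hom.is_hom[OF peval_lext])

lemma peval_single: "peval X (Poly_Mapping.single m z) = z * mmon X m"
  unfolding peval_def by (rule lext_hom.lext_single[OF peval_lext])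

lemma peval_pvar: "peval X (pvar v) = X v"
  by (simp add: pvar_def peval_single mmon_def)

lemma peval_pmonom: "peval X (pmonom a) = mmon X a"
  by (simp add: pmonom_def peval_single)


lemma edge_superset:
  assumes "finite A" "Poly_Mapping.keys m \<subseteq> A"
  shows "edge_monomial_map m = (\<Sum>(p, F)\<in>A.
      Poly_Mapping.single (Inl p) (Poly_Mapping.lookup m (p, F)) + Poly_Mapping.single (Inr F) (Poly_Mapping.lookup m (p, F)))"
  unfolding edge_monomial_map_def
  by (rule sum.mono_neutral_left) (use assms in \<open>auto simp: in_keys_iff\<close>)

lemma edge_add: "edge_monomial_map (a + b) = edge_monomial_map a + edge_monomial_map b"
proof -
  let ?A = "Poly_Mapping.keys a \<union> Poly_Mapping.keys b"
  have "edge_monomial_map (a + b) = (\<Sum>(p, F)\<in>?A.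
      Poly_Mapping.single (Inl p) (Poly_Mapping.lookup (a+b) (p, F)) + Poly_Mapping.single (Inr F) (Poly_Mapping.lookup (a+b) (p, F)))"
    by (rule edge_superset) (use keys_add[of a b] in auto)
  also have "\<dots> = edge_monomial_map a + edge_monomial_map b"
    by (simp add: edge_superset[of ?A a] edge_superset[of ?A b] lookup_add single_add
        sum.distrib[symmetric] split_def algebra_simps)
  finally show ?thesis .
qed

lemma edge_zero: "edge_monomial_map 0 = 0" by (simp add: edge_monomial_map_def)

lemma lookup_edge: "Poly_Mapping.lookup (edge_monomial_map m) w =
   (\<Sum>v\<in>Poly_Mapping.keys m. (if Inl (fst v) = w then Poly_Mapping.lookup m v else 0)
       + (if Inr (snd v) = w then Poly_Mapping.lookup m v else 0))"
  by (simp add: edge_monomial_map_def lookup_sum lookup_add lookup_single when_def split_def)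

lemma single0_hom: "comm_ring_hom (\<lambda>z::complex. Poly_Mapping.single (0::'w \<Rightarrow>\<^sub>0 nat) z)"
  by unfold_locales (auto simp: single_add mult_single)

lemma toric_lext: "lext_hom (\<lambda>z::complex. Poly_Mapping.single (0::('a + 'a set) \<Rightarrow>\<^sub>0 nat) z)
   (\<lambda>m. Poly_Mapping.single (edge_monomial_map m) 1)"
  by (intro lext_hom.intro single0_hom) (auto simp: edge_zero edge_add mult_single)

lemma toric_hom_lext: "toric_hom f = lext (\<lambda>z. Poly_Mapping.single 0 z) (\<lambda>m. Poly_Mapping.single (edge_monomial_map m) 1) f"
  unfolding toric_hom_def lext_def by (simp add: mult_single)

lemma toric_hom_hom: "comm_ring_hom toric_hom"
  using lext_hom.is_hom[OF toric_lext] toric_hom_lext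
  by (metis ext)

lemma toric_pmonom: "toric_hom (pmonom a) = Poly_Mapping.single (edge_monomial_map a) 1"
  unfolding toric_hom_lext pmonom_def lext_hom.lext_single[OF toric_lext] by simp

lemma rank_det:
  fixes U :: "'k \<Rightarrow> nat \<Rightarrow> 'b::comm_ring_1"
  assumes K: "finite K" "card K < n"
  shows "Determinant.det (Matrix.mat n n (\<lambda>(i,j). \<Sum>k\<in>K. U k i * W k j)) = 0"
proof -
  obtain h where h: "bij_betw h {0..<card K} K"
    using ex_bij_betw_nat_finite[OF K(1)] by blast
  define A where "A = Matrix.mat n n (\<lambda>(i,l). if l < card K then U (h l) i else 0)"
  define B where "B = Matrix.mat n n (\<lambda>(l,j). if l < card K then W (h l) j else 0)"
  have AB: "Matrix.mat n n (\<lambda>(i,j). \<Sum>k\<in>K. U k i * W k j) = A * B"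
  proof (rule eq_matI)
    fix i j assume ij: "i < dim_row (A * B)" "j < dim_col (A * B)"
    hence ij': "i < n" "j < n" by (auto simp: A_def B_def)
    have "(A * B) $$ (i, j) = (\<Sum>l\<in>{0..<n}. A $$ (i,l) * B $$ (l,j))"
      using ij' by (simp add: A_def B_def scalar_prod_def)
    also have "\<dots> = (\<Sum>l\<in>{0..<n}. if l < card K then U (h l) i * W (h l) j else 0)"
      using ij' by (intro sum.cong) (auto simp: A_def B_def)
    also have "\<dots> = (\<Sum>l\<in>{0..<card K}. if l < card K then U (h l) i * W (h l) j else 0)"
      by (rule sum.mono_neutral_right) (use K(2) in auto)
    also have "\<dots> = (\<Sum>l\<in>{0..<card K}. U (h l) i * W (h l) j)"
      by simp
    also have "\<dots> = (\<Sum>k\<in>K. U k i * W k j)"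
      using sum.reindex_bij_betw[OF h, of "\<lambda>k. U k i * W k j"] by simp
    finally show "Matrix.mat n n (\<lambda>(i,j). \<Sum>k\<in>K. U k i * W k j) $$ (i, j) = (A * B) $$ (i, j)"
      using ij' by simp
  qed (auto simp: A_def B_def)
  have "Determinant.det B = 0"
  proof -
    have "(\<Prod>i = 0..<n. B $$ (i, p i)) = 0" if p: "p permutes {0..<n}" for p
    proof (rule prod_zero)
      have "n - 1 \<in> {0..<n}" using K(2) by auto
      then have "p (n - 1) \<in> {0..<n}" using permutes_in_image[OF p, of "n - 1"] by simp
      then have "p (n - 1) < n" by simp
      then show "\<exists>a\<in>{0..<n}. B $$ (a, p a) = 0"
        using K(2) by (intro bexI[of _ "n - 1"]) (auto simp: B_def)
    qed simp
    then show ?thesis unfolding det_def by (simp add: B_def)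
  qed
  then show ?thesis unfolding AB
    by (subst det_mult[of _ n]) (auto simp: A_def B_def)
qed

lemma minor_det_mat:
  assumes "length rs = n" "length cs = n"
  shows "minor_det M rs cs = Determinant.det (Matrix.mat n n (\<lambda>(i,j). M (rs ! i) (cs ! j)))"
proof -
  have "(\<Prod>i = 0..<n. Matrix.mat n n (\<lambda>(i,j). M (rs ! i) (cs ! j)) $$ (i, p i))
      = (\<Prod>i<n. M (rs ! i) (cs ! p i))" if p: "p permutes {0..<n}" for p
  proof -
    have "Matrix.mat n n (\<lambda>(i,j). M (rs ! i) (cs ! j)) $$ (i, p i) = M (rs ! i) (cs ! p i)"
      if i: "i \<in> {0..<n}" for i
    proof -
      have "p i \<in> {0..<n}" using permutes_in_image[OF p, of i] i by simp
      then show ?thesis using i by simp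
    qed
    then show ?thesis by (simp add: atLeast0LessThan)
  qed
  then show ?thesis using assms unfolding minor_det_def det_def
    by (simp add: atLeast0LessThan)
qed

lemma minor_det_cong:
  assumes "\<And>p F. p \<in> set rs \<Longrightarrow> F \<in> set cs \<Longrightarrow> M p F = M' p F" "length rs = length cs"
  shows "minor_det M rs cs = minor_det M' rs cs"
proof -
  have "M (rs ! i) (cs ! \<sigma> i) = M' (rs ! i) (cs ! \<sigma> i)"
    if "\<sigma> permutes {..<length rs}" "i < length rs" for \<sigma> i
  proof -
    have "\<sigma> i < length rs" using that permutes_in_image[OF that(1)] by auto
    then show ?thesis using that(2) assms(2) by (intro assms(1) nth_mem) simp_all
  qed
  then have "(\<Prod>i<length rs. M (rs ! i) (cs ! \<sigma> i)) = (\<Prod>i<length rs. M' (rs ! i) (cs ! \<sigma> i))"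
    if "\<sigma> permutes {..<length rs}" for \<sigma>
    using that by (intro prod.cong) auto
  then show ?thesis unfolding minor_det_def
    by (intro sum.cong refl) auto
qed


definition fa :: "'a::euclidean_space set \<Rightarrow> 'a set \<Rightarrow> 'a \<times> real" where
  "fa P F = (SOME ab. fst ab \<noteq> 0 \<and> P \<subseteq> {x. inner (fst ab) x \<le> snd ab} \<and> F = P \<inter> {x. inner (fst ab) x = snd ab})"

lemma fa_prop:
  assumes "polytope P" "F \<in> poly_facets P"
  shows "P \<subseteq> {x. inner (fst (fa P F)) x \<le> snd (fa P F)} \<and> F = P \<inter> {x. inner (fst (fa P F)) x = snd (fa P F)}"
proof -
  obtain a b where ab: "a \<noteq> 0" "P \<subseteq> {x. inner a x \<le> b}" "F = P \<inter> {x. inner a x = b}"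
    using facet_of_polyhedron[OF polytope_imp_polyhedron[OF assms(1)]] assms(2)
    unfolding poly_facets_def by blast
  have "\<exists>ab. fst ab \<noteq> 0 \<and> P \<subseteq> {x. inner (fst ab) x \<le> snd ab} \<and> F = P \<inter> {x. inner (fst ab) x = snd ab}"
    using ab by (intro exI[of _ "(a, b)"]) auto
  from someI_ex[OF this] show ?thesis unfolding fa_def by blast
qed

definition Tm :: "'a::euclidean_space set \<Rightarrow> 'a \<Rightarrow> 'a set \<Rightarrow> complex" where
  "Tm P p F = complex_of_real (snd (fa P F) - inner (fst (fa P F)) p)"

lemma vertex_in: "p \<in> poly_vertices P \<Longrightarrow> p \<in> P"
  by (simp add: poly_vertices_def extreme_point_of_def)

lemma Tm_zero_iff:
  assumes "polytope P" "p \<in> poly_vertices P" "F \<in> poly_facets P"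
  shows "Tm P p F = 0 \<longleftrightarrow> p \<in> F"
proof -
  have h: "F = P \<inter> {x. inner (fst (fa P F)) x = snd (fa P F)}" using fa_prop[OF assms(1,3)] by blast
  have p: "p \<in> P" using vertex_in[OF assms(2)] .
  have "Tm P p F = 0 \<longleftrightarrow> inner (fst (fa P F)) p = snd (fa P F)" by (auto simp: Tm_def)
  also have "\<dots> \<longleftrightarrow> p \<in> F" by (subst h) (simp add: p)
  finally show ?thesis .
qed

definition Xe :: "('a + 'a set \<Rightarrow> complex) \<Rightarrow> 'a::euclidean_space set \<Rightarrow> 'a \<times> 'a set \<Rightarrow> complex" where
  "Xe e P v = e (Inl (fst v)) * e (Inr (snd v)) * Tm P (fst v) (snd v)"

definition Uf :: "('a + 'a set \<Rightarrow> complex) \<Rightarrow> 'a option \<Rightarrow> 'a::euclidean_space \<Rightarrow> complex" where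
  "Uf e k p = e (Inl p) * (case k of None \<Rightarrow> 1 | Some i \<Rightarrow> - complex_of_real (inner p i))"

definition Wf :: "('a + 'a set \<Rightarrow> complex) \<Rightarrow> 'a::euclidean_space set \<Rightarrow> 'a option \<Rightarrow> 'a set \<Rightarrow> complex" where
  "Wf e P k F = e (Inr F) * (case k of None \<Rightarrow> complex_of_real (snd (fa P F))
      | Some i \<Rightarrow> complex_of_real (inner (fst (fa P F)) i))"

definition Kset :: "'a::euclidean_space option set" where
  "Kset = insert None (Some ` Basis)"

lemma Kset_card: "finite (Kset :: 'a::euclidean_space option set)" "card (Kset :: 'a option set) = DIM('a) + 1"
  unfolding Kset_def by (auto simp: card_image)

lemma Xe_decomp: "Xe e P (p, F) = (\<Sum>k\<in>Kset. Uf e k p * Wf e P k F)"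
proof -
  have "inner (fst (fa P F)) p = (\<Sum>i\<in>Basis. inner (fst (fa P F)) i * inner p i)"
    by (rule euclidean_inner)
  then have T: "Tm P p F = complex_of_real (snd (fa P F)) - (\<Sum>i\<in>Basis. complex_of_real (inner (fst (fa P F)) i) * complex_of_real (inner p i))"
    unfolding Tm_def by simp
  have "(\<Sum>k\<in>Kset. Uf e k p * Wf e P k F) = Uf e None p * Wf e P None F + (\<Sum>i\<in>Basis. Uf e (Some i) p * Wf e P (Some i) F)"
    unfolding Kset_def by (simp add: sum.reindex)
  also have "\<dots> = e (Inl p) * e (Inr F) * Tm P p F"
    unfolding T Uf_def Wf_def by (simp add: sum_distrib_left algebra_simps sum_subtractf sum_negf)
  finally show ?thesis by (simp add: Xe_def)
qed

lemma minor_vanish: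
  fixes P :: "'a::euclidean_space set"
  assumes "polytope P" "h \<in> slack_minors (DIM('a) + 2) P"
  shows "peval (Xe e P) h = 0"
proof -
  interpret H: comm_ring_hom "peval (Xe e P)" by (rule peval_hom)
  obtain rs cs where rc: "h = minor_det (symbolic_slack P) rs cs" "length rs = DIM('a) + 2"
     "length cs = DIM('a) + 2" "set rs \<subseteq> poly_vertices P" "set cs \<subseteq> poly_facets P"
    using assms(2) unfolding slack_minors_def by blast
  have "peval (Xe e P) h = minor_det (\<lambda>p F. peval (Xe e P) (symbolic_slack P p F)) rs cs"
    unfolding rc(1) minor_det_def by (simp add: H.hom_sum H.hom_mult H.hom_prod H.hom_power H.hom_of_int H.hom_minus)
  also have "\<dots> = minor_det (\<lambda>p F. \<Sum>k\<in>Kset. Uf e k p * Wf e P k F) rs cs"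
  proof (rule minor_det_cong)
    fix p F assume pF: "p \<in> set rs" "F \<in> set cs"
    then have pv: "p \<in> poly_vertices P" and Ff: "F \<in> poly_facets P" using rc by auto
    show "peval (Xe e P) (symbolic_slack P p F) = (\<Sum>k\<in>Kset. Uf e k p * Wf e P k F)"
      using Tm_zero_iff[OF assms(1) pv Ff]
      by (auto simp: symbolic_slack_def peval_pvar Xe_decomp[symmetric] Xe_def)
  qed (use rc in auto)
  also have "\<dots> = Determinant.det (Matrix.mat (DIM('a) + 2) (DIM('a) + 2)
      (\<lambda>(i,j). \<Sum>k\<in>Kset. Uf e k (rs ! i) * Wf e P k (cs ! j)))"
    by (rule minor_det_mat) (use rc in auto)
  also have "\<dots> = 0"
    by (rule rank_det[where U="\<lambda>k i. Uf e k (rs ! i)" and W="\<lambda>k j. Wf e P k (cs ! j)"])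
       (auto simp: Kset_card)
  finally show ?thesis .
qed

lemma slack_vars_Tm:
  assumes "polytope P" "v \<in> slack_vars P"
  shows "Tm P (fst v) (snd v) \<noteq> 0"
  using assms Tm_zero_iff[OF assms(1)] unfolding slack_vars_def by auto

lemma sat_vanish:
  fixes P :: "'a::euclidean_space set"
  assumes "polytope P" "\<And>z. e z \<noteq> 0" "f \<in> slack_ideal P"
  shows "peval (Xe e P) f = 0"
proof -
  interpret H: comm_ring_hom "peval (Xe e P)" by (rule peval_hom)
  let ?V = "slack_vars P"
  obtain k where k: "(\<Prod>v\<in>?V. pvar v) ^ k * f \<in> ideal_gen ?V (slack_minors (DIM('a) + 2) P)"
    using assms(3) unfolding slack_ideal_def saturation_def by blast
  then obtain A c where Ac: "A \<subseteq> slack_minors (DIM('a) + 2) P"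
      "(\<Prod>v\<in>?V. pvar v) ^ k * f = (\<Sum>g\<in>A. c g * g)"
    unfolding ideal_gen_def by blast
  have "peval (Xe e P) ((\<Prod>v\<in>?V. pvar v) ^ k * f) = 0"
    unfolding Ac(2) using Ac(1) minor_vanish[OF assms(1)]
    by (simp add: H.hom_sum H.hom_mult H.hom_prod H.hom_power H.hom_of_int H.hom_minus subset_iff)
  then have "(\<Prod>v\<in>?V. Xe e P v) ^ k * peval (Xe e P) f = 0"
    by (simp add: H.hom_sum H.hom_mult H.hom_prod H.hom_power H.hom_of_int H.hom_minus peval_pvar)
  moreover have "(\<Prod>v\<in>?V. Xe e P v) \<noteq> 0"
  proof (cases "finite ?V")
    case True
    then show ?thesis using slack_vars_Tm[OF assms(1)] assms(2)
      by (auto simp: Xe_def)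
  qed simp
  ultimately show ?thesis by simp
qed

lemma pow2_if: "((if a then 2 else 1) * (if b then 2 else 1)) ^ n
   = (2::complex) ^ ((if a then n else 0) + (if b then n else 0))"
  by (auto simp: power_add power_mult_distrib)

lemma binom_edge:
  fixes P :: "'a::euclidean_space set"
  assumes "polytope P" "pmonom a - pmonom b \<in> slack_ideal P"
    and ka: "Poly_Mapping.keys a \<subseteq> slack_vars P" and kb: "Poly_Mapping.keys b \<subseteq> slack_vars P"
  shows "edge_monomial_map a = edge_monomial_map b"
proof -
  define T where "T v = Tm P (fst v) (snd v)" for v
  have eq: "mmon (\<lambda>v. e (Inl (fst v)) * e (Inr (snd v))) a * mmon T a =
      mmon (\<lambda>v. e (Inl (fst v)) * e (Inr (snd v))) b * mmon T b" if e: "\<And>z. e z \<noteq> 0" for e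
  proof -
    interpret H: comm_ring_hom "peval (Xe e P)" by (rule peval_hom)
    have "peval (Xe e P) (pmonom a - pmonom b) = 0" by (rule sat_vanish[OF assms(1) e assms(2)])
    then have "mmon (Xe e P) a = mmon (Xe e P) b" by (simp add: H.hom_sum H.hom_mult H.hom_prod H.hom_power H.hom_of_int H.hom_minus peval_pmonom)
    moreover have "Xe e P = (\<lambda>v. e (Inl (fst v)) * e (Inr (snd v)) * T v)"
      by (auto simp: Xe_def T_def)
    ultimately show ?thesis by (simp add: mmon_mult_fun)
  qed
  have nz: "mmon T m \<noteq> 0" if "Poly_Mapping.keys m \<subseteq> slack_vars P" for m
    using that slack_vars_Tm[OF assms(1)] unfolding mmon_def T_def by auto
  have "mmon T a = mmon T b"
    using eq[of "\<lambda>_. 1"] by (simp add: mmon_def)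
  then have eq2: "mmon (\<lambda>v. e (Inl (fst v)) * e (Inr (snd v))) a = mmon (\<lambda>v. e (Inl (fst v)) * e (Inr (snd v))) b"
    if "\<And>z. e z \<noteq> 0" for e
    using eq[OF that] nz[OF ka] by simp
  have m2: "mmon (\<lambda>v. (if Inl (fst v) = w then 2 else 1) * (if Inr (snd v) = w then 2 else 1)) m
       = (2::complex) ^ Poly_Mapping.lookup (edge_monomial_map m) w" for m w
    unfolding mmon_def lookup_edge pow2_if power_sum by simp
  show ?thesis
  proof (rule poly_mapping_eqI)
    fix w
    have "(2::complex) ^ Poly_Mapping.lookup (edge_monomial_map a) w = 2 ^ Poly_Mapping.lookup (edge_monomial_map b) w"
      using eq2[of "\<lambda>z. if z = w then 2 else 1"] unfolding m2 by simp
    then have "(2::nat) ^ Poly_Mapping.lookup (edge_monomial_map a) w = 2 ^ Poly_Mapping.lookup (edge_monomial_map b) w"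
      by (metis (mono_tags, lifting) of_nat_eq_iff of_nat_numeral of_nat_power)
    then show "Poly_Mapping.lookup (edge_monomial_map a) w = Poly_Mapping.lookup (edge_monomial_map b) w"
      by simp
  qed
qed

theorem corollary3p5:
  fixes P :: "'a::euclidean_space set"
  assumes "polytope P"
    and "aff_dim P = int DIM('a)"
    and "pure_difference_binomial_ideal (slack_vars P) (slack_ideal P)"
  shows "slack_ideal P \<subseteq> toric_ideal P"
proof
  interpret TH: comm_ring_hom toric_hom by (rule toric_hom_hom)
  let ?V = "slack_vars P"
  obtain G where G: "G \<subseteq> {pmonom a - pmonom b | a b. Poly_Mapping.keys a \<subseteq> ?V \<and> Poly_Mapping.keys b \<subseteq> ?V}"
      "slack_ideal P = ideal_gen ?V G"
    using assms(3) unfolding pure_difference_binomial_ideal_def by blast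
  fix f assume f: "f \<in> slack_ideal P"
  have fr: "f \<in> poly_ring ?V" using f unfolding slack_ideal_def saturation_def by blast
  have tg: "toric_hom g = 0" if g: "g \<in> G" for g
  proof -
    obtain a b where ab: "g = pmonom a - pmonom b" "Poly_Mapping.keys a \<subseteq> ?V" "Poly_Mapping.keys b \<subseteq> ?V"
      using G(1) g by blast
    have one: "(1::('a \<times> 'a set) cpoly) \<in> poly_ring ?V" by (simp add: poly_ring_def)
    have "g \<in> ideal_gen ?V G"
      unfolding ideal_gen_def using g one
      by (intro CollectI exI[of _ "{g}"] exI[of _ "\<lambda>_. 1"]) auto
    then have "g \<in> slack_ideal P" using G(2) by simp
    then have "edge_monomial_map a = edge_monomial_map b"
      using binom_edge[OF assms(1) _ ab(2,3)] ab(1) by simp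
    then show ?thesis by (simp add: ab(1) TH.hom_sum TH.hom_mult TH.hom_minus toric_pmonom)
  qed
  obtain A c where Ac: "A \<subseteq> G" "f = (\<Sum>g\<in>A. c g * g)"
    using f G(2) unfolding ideal_gen_def by blast
  have "toric_hom f = 0" unfolding Ac(2) using Ac(1) tg
    by (simp add: TH.hom_sum TH.hom_mult TH.hom_minus subset_iff)
  then show "f \<in> toric_ideal P" using fr unfolding toric_ideal_def by simp
qed

end
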